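(* Under the standing assumptions below, let $a=v+ix\in B$ with $v\in V$ and $0\le i<k$. Then: (1) $a\in Z(B,+)$ if and only if $Av=v$ and $A^i(w)=-v+w+v$ for all $w\in V$; (2) $V\cap Z(B,+)=0$; (3) $\mathrm{Soc}(B)=0$, where $\mathrm{Soc}(B)=\{b\in B:\lambda_b=\mathrm{id}\text{ and }b\in Z(B,+)\}$.
   Context: Skew left brace $(B,+,\circ)$: groups $(B,+)$, $(B,\circ)$ with $a\circ(b+c)=a\circ b-a+a\circ c$; $\lambda_a(b)=-a+a\circ b$, $\sigma_a(b)=-a+b+a$, $a*b=-a+a\circ b-b$. Ideal: normal subgroup $I$ of $(B,+)$, $\lambda_a(I)\subseteq I$ for all $a$, normal in $(B,\circ)$. $I*J$ = additive subgroup generated by $\{i*j\}$; $B^{(2)}=B*B$, $B^{(3)}=B^{(2)}*B$. Standing assumptions: $B$ is a finite skew left brace and $X\subseteq B$ with $|X|\ge3$ and $\lambda_a(X)=X$, $\sigma_a(X)=X$ for all $a\in B$; $B$ is additively generated by $X$; the ideal $V$ generated by $\{x-y:x,y\in X\}$ is the smallest non-zero ideal of $B$; $B/V$ is a trivial skew left brace with cyclic additive group; the group $\{\sigma_a\lambda_b|_X:a,b\in V\}$ acts transitively on $X$; and $B^{(3)}=0$. Fix $x\in X$ and let $k=|B/V|$; then every element of $B$ is uniquely $v+ix$ with $v\in V$, $0\le i<k$. $A\in\mathrm{Aut}(V,+)$ is $Av=x+v-x$. *)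

theory Defs
  imports "HOL-Algebra.Algebra"
begin

definition addG :: "'a set \<Rightarrow> ('a \<Rightarrow> 'a \<Rightarrow> 'a) \<Rightarrow> 'a \<Rightarrow> 'a monoid" where
  "addG B p z = \<lparr>carrier = B, monoid.mult = p, monoid.one = z\<rparr>"

definition circ_one :: "'a set \<Rightarrow> ('a \<Rightarrow> 'a \<Rightarrow> 'a) \<Rightarrow> 'a" where
  "circ_one B c = (THE e. e \<in> B \<and> (\<forall>a\<in>B. c e a = a \<and> c a e = a))"

definition circG :: "'a set \<Rightarrow> ('a \<Rightarrow> 'a \<Rightarrow> 'a) \<Rightarrow> 'a monoid" where
  "circG B c = \<lparr>carrier = B, monoid.mult = c, monoid.one = circ_one B c\<rparr>"

definition bneg :: "'a set \<Rightarrow> ('a \<Rightarrow> 'a \<Rightarrow> 'a) \<Rightarrow> 'a \<Rightarrow> 'a \<Rightarrow> 'a" where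
  "bneg B p z a = inv\<^bsub>addG B p z\<^esub> a"

definition skew_brace :: "'a set \<Rightarrow> ('a \<Rightarrow> 'a \<Rightarrow> 'a) \<Rightarrow> 'a \<Rightarrow> ('a \<Rightarrow> 'a \<Rightarrow> 'a) \<Rightarrow> bool" where
  "skew_brace B p z c \<longleftrightarrow>
     group (addG B p z) \<and> (\<exists>e. group \<lparr>carrier = B, monoid.mult = c, monoid.one = e\<rparr>) \<and>
     (\<forall>a\<in>B. \<forall>b\<in>B. \<forall>d\<in>B. c a (p b d) = p (p (c a b) (bneg B p z a)) (c a d))"

definition blam :: "'a set \<Rightarrow> ('a \<Rightarrow> 'a \<Rightarrow> 'a) \<Rightarrow> 'a \<Rightarrow> ('a \<Rightarrow> 'a \<Rightarrow> 'a) \<Rightarrow> 'a \<Rightarrow> 'a \<Rightarrow> 'a" where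
  "blam B p z c a b = p (bneg B p z a) (c a b)"

definition bsig :: "'a set \<Rightarrow> ('a \<Rightarrow> 'a \<Rightarrow> 'a) \<Rightarrow> 'a \<Rightarrow> 'a \<Rightarrow> 'a \<Rightarrow> 'a" where
  "bsig B p z a b = p (p (bneg B p z a) b) a"

definition bstar :: "'a set \<Rightarrow> ('a \<Rightarrow> 'a \<Rightarrow> 'a) \<Rightarrow> 'a \<Rightarrow> ('a \<Rightarrow> 'a \<Rightarrow> 'a) \<Rightarrow> 'a \<Rightarrow> 'a \<Rightarrow> 'a" where
  "bstar B p z c a b = p (p (bneg B p z a) (c a b)) (bneg B p z b)"

definition brace_ideal :: "'a set \<Rightarrow> ('a \<Rightarrow> 'a \<Rightarrow> 'a) \<Rightarrow> 'a \<Rightarrow> ('a \<Rightarrow> 'a \<Rightarrow> 'a) \<Rightarrow> 'a set \<Rightarrow> bool" where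
  "brace_ideal B p z c I \<longleftrightarrow>
     normal I (addG B p z) \<and> (\<forall>a\<in>B. blam B p z c a ` I \<subseteq> I) \<and> normal I (circG B c)"

definition ideal_gen :: "'a set \<Rightarrow> ('a \<Rightarrow> 'a \<Rightarrow> 'a) \<Rightarrow> 'a \<Rightarrow> ('a \<Rightarrow> 'a \<Rightarrow> 'a) \<Rightarrow> 'a set \<Rightarrow> 'a set" where
  "ideal_gen B p z c S = \<Inter>{I. brace_ideal B p z c I \<and> S \<subseteq> I}"

definition star_set :: "'a set \<Rightarrow> ('a \<Rightarrow> 'a \<Rightarrow> 'a) \<Rightarrow> 'a \<Rightarrow> ('a \<Rightarrow> 'a \<Rightarrow> 'a) \<Rightarrow> 'a set \<Rightarrow> 'a set \<Rightarrow> 'a set" where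
  "star_set B p z c I J = generate (addG B p z) {u. \<exists>i\<in>I. \<exists>j\<in>J. u = bstar B p z c i j}"

definition add_center :: "'a set \<Rightarrow> ('a \<Rightarrow> 'a \<Rightarrow> 'a) \<Rightarrow> 'a set" where
  "add_center B p = {a \<in> B. \<forall>b\<in>B. p a b = p b a}"

definition socle :: "'a set \<Rightarrow> ('a \<Rightarrow> 'a \<Rightarrow> 'a) \<Rightarrow> 'a \<Rightarrow> ('a \<Rightarrow> 'a \<Rightarrow> 'a) \<Rightarrow> 'a set" where
  "socle B p z c = {b \<in> B. (\<forall>d\<in>B. blam B p z c b d = d) \<and> b \<in> add_center B p}"

end

theory Submission
  imports Defs
begin

locale SB =
  fixes B :: "'a set" and p :: "'a \<Rightarrow> 'a \<Rightarrow> 'a" and z :: 'a and c :: "'a \<Rightarrow> 'a \<Rightarrow> 'a"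
  assumes sb: "skew_brace B p z c"
begin

abbreviation "G \<equiv> addG B p z"
abbreviation "n \<equiv> bneg B p z"

lemma grpG: "group G" using sb unfolding skew_brace_def by auto

lemma Gc[simp]: "carrier G = B" "monoid.mult G = p" "one G = z"
  by (simp_all add: addG_def)

lemma pc[simp,intro]: "a \<in> B \<Longrightarrow> b \<in> B \<Longrightarrow> p a b \<in> B"
  using group.is_monoid[OF grpG] monoid.m_closed by fastforce
lemma zB[simp,intro]: "z \<in> B"
  using group.is_monoid[OF grpG] monoid.one_closed by fastforce
lemma pa: "a \<in> B \<Longrightarrow> b \<in> B \<Longrightarrow> d \<in> B \<Longrightarrow> p (p a b) d = p a (p b d)"
  using group.is_monoid[OF grpG] monoid.m_assoc by fastforce
lemma pzl[simp]: "a \<in> B \<Longrightarrow> p z a = a"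
  using group.is_monoid[OF grpG] monoid.l_one by fastforce
lemma pzr[simp]: "a \<in> B \<Longrightarrow> p a z = a"
  using group.is_monoid[OF grpG] monoid.r_one by fastforce
lemma nc[simp,intro]: "a \<in> B \<Longrightarrow> n a \<in> B"
  unfolding bneg_def using group.inv_closed[OF grpG] by fastforce
lemma nr[simp]: "a \<in> B \<Longrightarrow> p a (n a) = z"
  unfolding bneg_def using group.r_inv[OF grpG] by fastforce
lemma nl[simp]: "a \<in> B \<Longrightarrow> p (n a) a = z"
  unfolding bneg_def using group.l_inv[OF grpG] by fastforce
lemma pcanl[simp]: "a \<in> B \<Longrightarrow> b \<in> B \<Longrightarrow> p a (p (n a) b) = b"
  by (simp add: pa[symmetric])
lemma pcanl2[simp]: "a \<in> B \<Longrightarrow> b \<in> B \<Longrightarrow> p (n a) (p a b) = b"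
  by (simp add: pa[symmetric])
lemma nunique: "a \<in> B \<Longrightarrow> b \<in> B \<Longrightarrow> p a b = z \<Longrightarrow> n a = b"
  by (metis nc pcanl2 pzr)
lemma nn[simp]: "a \<in> B \<Longrightarrow> n (n a) = a"
  by (rule nunique) auto
lemma nz[simp]: "n z = z" by (rule nunique) auto
lemma np: "a \<in> B \<Longrightarrow> b \<in> B \<Longrightarrow> n (p a b) = p (n b) (n a)"
  by (rule nunique) (auto simp: pa)
lemma lcan: "a \<in> B \<Longrightarrow> b \<in> B \<Longrightarrow> d \<in> B \<Longrightarrow> p a b = p a d \<longleftrightarrow> b = d"
  by (metis pcanl2)
lemma rcan: "a \<in> B \<Longrightarrow> b \<in> B \<Longrightarrow> d \<in> B \<Longrightarrow> p b a = p d a \<longleftrightarrow> b = d"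
  by (metis pa nr nc pzr)

lemma circ_ex: "\<exists>e. group \<lparr>carrier = B, monoid.mult = c, monoid.one = e\<rparr>"
  using sb unfolding skew_brace_def by auto
lemma dist: "a \<in> B \<Longrightarrow> b \<in> B \<Longrightarrow> d \<in> B \<Longrightarrow> c a (p b d) = p (p (c a b) (n a)) (c a d)"
  using sb unfolding skew_brace_def by auto

lemma circ_grp: "group \<lparr>carrier = B, monoid.mult = c, monoid.one = z\<rparr>"
proof -
  obtain e where g: "group \<lparr>carrier = B, monoid.mult = c, monoid.one = e\<rparr>" using circ_ex by auto
  have eB: "e \<in> B" using group.is_monoid[OF g] monoid.one_closed by fastforce
  have cez: "c e z = z" using group.is_monoid[OF g] monoid.l_one by fastforce
  have "c e (p z z) = p (p (c e z) (n e)) (c e z)" using dist[of e z z] eB by simp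
  hence "z = n e" using cez eB by simp
  hence "e = z" using eB by (metis nn nz)
  thus ?thesis using g by simp
qed

abbreviation "C \<equiv> \<lparr>carrier = B, monoid.mult = c, monoid.one = z\<rparr>"

lemma circ_one_z: "circ_one B c = z"
  unfolding circ_one_def
proof (rule the_equality)
  show "z \<in> B \<and> (\<forall>a\<in>B. c z a = a \<and> c a z = a)"
    using group.is_monoid[OF circ_grp] monoid.l_one monoid.r_one by fastforce
next
  fix e assume "e \<in> B \<and> (\<forall>a\<in>B. c e a = a \<and> c a e = a)"
  moreover have "c e z = e" using calculation group.is_monoid[OF circ_grp] monoid.r_one by fastforce
  ultimately show "e = z" by auto
qed

lemma circG_eq: "circG B c = C" by (simp add: circG_def circ_one_z)

lemma cc[simp,intro]: "a \<in> B \<Longrightarrow> b \<in> B \<Longrightarrow> c a b \<in> B"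
  using group.is_monoid[OF circ_grp] monoid.m_closed by fastforce
lemma ca: "a \<in> B \<Longrightarrow> b \<in> B \<Longrightarrow> d \<in> B \<Longrightarrow> c (c a b) d = c a (c b d)"
  using group.is_monoid[OF circ_grp] monoid.m_assoc by fastforce
lemma czl[simp]: "a \<in> B \<Longrightarrow> c z a = a"
  using group.is_monoid[OF circ_grp] monoid.l_one by fastforce
lemma czr[simp]: "a \<in> B \<Longrightarrow> c a z = a"
  using group.is_monoid[OF circ_grp] monoid.r_one by fastforce

definition ci where "ci a = inv\<^bsub>C\<^esub> a"
lemma cic[simp,intro]: "a \<in> B \<Longrightarrow> ci a \<in> B"
  unfolding ci_def using group.inv_closed[OF circ_grp] by fastforce
lemma cir[simp]: "a \<in> B \<Longrightarrow> c a (ci a) = z"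
  unfolding ci_def using group.r_inv[OF circ_grp] by fastforce
lemma cil[simp]: "a \<in> B \<Longrightarrow> c (ci a) a = z"
  unfolding ci_def using group.l_inv[OF circ_grp] by fastforce
lemma ccanl[simp]: "a \<in> B \<Longrightarrow> b \<in> B \<Longrightarrow> c a (c (ci a) b) = b"
  by (simp add: ca[symmetric])
lemma ccanl2[simp]: "a \<in> B \<Longrightarrow> b \<in> B \<Longrightarrow> c (ci a) (c a b) = b"
  by (simp add: ca[symmetric])

abbreviation "lam \<equiv> blam B p z c"
lemma lam_def': "lam a b = p (n a) (c a b)" by (simp add: blam_def)
lemma lamc[simp,intro]: "a \<in> B \<Longrightarrow> b \<in> B \<Longrightarrow> lam a b \<in> B" by (simp add: blam_def)
lemma c_lam: "a \<in> B \<Longrightarrow> b \<in> B \<Longrightarrow> c a b = p a (lam a b)" by (simp add: blam_def)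
lemma lam_hom: "a \<in> B \<Longrightarrow> b \<in> B \<Longrightarrow> d \<in> B \<Longrightarrow> lam a (p b d) = p (lam a b) (lam a d)"
  by (simp add: blam_def dist pa)
lemma lam_z[simp]: "a \<in> B \<Longrightarrow> lam a z = z"
  by (simp add: blam_def)
lemma lam_n: "a \<in> B \<Longrightarrow> b \<in> B \<Longrightarrow> lam a (n b) = n (lam a b)"
proof -
  assume a: "a \<in> B" "b \<in> B"
  have "p (lam a b) (lam a (n b)) = z" using a lam_hom[of a b "n b"] by simp
  thus ?thesis using a by (metis nunique lamc nc)
qed
lemma lam_zl[simp]: "b \<in> B \<Longrightarrow> lam z b = b" by (simp add: blam_def)
lemma lam_comp: "a \<in> B \<Longrightarrow> b \<in> B \<Longrightarrow> d \<in> B \<Longrightarrow> lam (c a b) d = lam a (lam b d)"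
proof -
  assume a: "a \<in> B" "b \<in> B" "d \<in> B"
  have "c a (c b d) = p (c a b) (lam a (lam b d))"
    using a by (simp add: c_lam[of b d] c_lam[of a "p b _"] lam_hom pa c_lam[of a b])
  hence "c (c a b) d = p (c a b) (lam a (lam b d))" using a by (simp add: ca)
  thus ?thesis using a by (simp add: blam_def)
qed


lemma invG[simp]: "inv\<^bsub>G\<^esub> a = n a" by (simp add: bneg_def)
lemma invC[simp]: "inv\<^bsub>C\<^esub> a = ci a" by (simp add: ci_def)

lemma ideal_crit:
  assumes SB: "S \<subseteq> B" and sg: "subgroup S G"
    and nor: "\<forall>g\<in>B. \<forall>s\<in>S. p (p g s) (n g) \<in> S"
    and li: "\<forall>a\<in>B. lam a ` S \<subseteq> S"
    and ker: "\<forall>s\<in>S. \<forall>b\<in>B. lam s b = b"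
  shows "brace_ideal B p z c S"
proof -
  have zS: "z \<in> S" using subgroup.one_closed[OF sg] by simp
  have pS: "\<And>s t. s \<in> S \<Longrightarrow> t \<in> S \<Longrightarrow> p s t \<in> S" using subgroup.m_closed[OF sg] by fastforce
  have nS: "\<And>s. s \<in> S \<Longrightarrow> n s \<in> S" using subgroup.m_inv_closed[OF sg] by fastforce
  have cst: "\<And>s t. s \<in> S \<Longrightarrow> t \<in> B \<Longrightarrow> c s t = p s t" using ker SB by (auto simp: c_lam)
  have n1: "normal S G"
    using group.normal_inv_iff[OF grpG] sg nor by simp
  have cis: "\<And>s. s \<in> S \<Longrightarrow> ci s = n s"
  proof -
    fix s assume s: "s \<in> S"
    hence sB: "s \<in> B" using SB by auto
    have "c s (n s) = z" using cst[of s "n s"] s sB by simp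
    hence "c (ci s) (c s (n s)) = ci s" using sB by simp
    thus "ci s = n s" using sB by simp
  qed
  have sgC: "subgroup S C"
  proof (rule subgroup.intro)
    show "S \<subseteq> carrier C" using SB by simp
    show "\<And>x y. x \<in> S \<Longrightarrow> y \<in> S \<Longrightarrow> x \<otimes>\<^bsub>C\<^esub> y \<in> S" using cst pS SB by auto
    show "\<one>\<^bsub>C\<^esub> \<in> S" using zS by simp
    show "\<And>x. x \<in> S \<Longrightarrow> inv\<^bsub>C\<^esub> x \<in> S" using cis nS by simp
  qed
  have conj: "\<And>g h. g \<in> B \<Longrightarrow> h \<in> S \<Longrightarrow> c (c g h) (ci g) \<in> S"
  proof -
    fix g h assume g: "g \<in> B" and h: "h \<in> S"
    hence hB: "h \<in> B" using SB by auto
    have "c (c g h) (ci g) = c g (p h (ci g))" using g hB cst[OF h] by (simp add: ca)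
    also have "\<dots> = p (c g h) (n g)" using g hB by (simp add: dist)
    also have "\<dots> = p (p g (lam g h)) (n g)" using g hB by (simp add: c_lam)
    moreover have "lam g h \<in> S" using li g h by auto
    ultimately show "c (c g h) (ci g) \<in> S" using nor g by auto
  qed
  have n2: "normal S C"
    using group.normal_inv_iff[OF circ_grp] sgC conj by simp
  show ?thesis unfolding brace_ideal_def circG_eq using n1 n2 li by auto
qed

lemma B_ideal: "brace_ideal B p z c B"
proof -
  have "normal B G" using group.normal_self[OF grpG] by simp
  moreover have "normal B C" using group.normal_self[OF circ_grp] by simp
  ultimately show ?thesis unfolding brace_ideal_def circG_eq by auto
qed


abbreviation "Z \<equiv> add_center B p"
lemma Z_iff: "u \<in> Z \<longleftrightarrow> u \<in> B \<and> (\<forall>b\<in>B. p u b = p b u)" by (simp add: add_center_def)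

lemma lam_surj: "a \<in> B \<Longrightarrow> b \<in> B \<Longrightarrow> lam a (c (ci a) (p a b)) = b"
  by (simp add: blam_def)

lemma lam_central: assumes a: "a \<in> B" and u: "u \<in> Z" shows "lam a u \<in> Z"
proof -
  have uB: "u \<in> B" using u Z_iff by auto
  { fix b assume b: "b \<in> B"
    define t where "t = c (ci a) (p a b)"
    have tB: "t \<in> B" using a b t_def by simp
    have bt: "b = lam a t" using lam_surj a b t_def by simp
    have "p u t = p t u" using u tB Z_iff by auto
    hence "lam a (p u t) = lam a (p t u)" by simp
    hence "p (lam a u) b = p b (lam a u)" using a uB tB bt by (simp add: lam_hom)
  }
  thus ?thesis using Z_iff a uB by auto
qed

lemma Z_sub: "subgroup Z G"
proof (rule subgroup.intro)
  show "Z \<subseteq> carrier G" using Z_iff by auto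
  show "\<And>x y. x \<in> Z \<Longrightarrow> y \<in> Z \<Longrightarrow> x \<otimes>\<^bsub>G\<^esub> y \<in> Z"
  proof -
    fix x y assume x: "x \<in> Z" and y: "y \<in> Z"
    hence xB: "x \<in> B" and yB: "y \<in> B" using Z_iff by auto
    { fix b assume b: "b \<in> B"
      have "p (p x y) b = p x (p y b)" using xB yB b by (simp add: pa)
      also have "\<dots> = p x (p b y)" using y b Z_iff by auto
      also have "\<dots> = p (p x b) y" using xB yB b by (simp add: pa)
      also have "\<dots> = p (p b x) y" using x b Z_iff by auto
      also have "\<dots> = p b (p x y)" using xB yB b by (simp add: pa)
      finally have "p (p x y) b = p b (p x y)" . }
    thus "x \<otimes>\<^bsub>G\<^esub> y \<in> Z" using xB yB Z_iff by simp
  qed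
  show "\<one>\<^bsub>G\<^esub> \<in> Z" by (simp add: Z_iff)
  show "\<And>x. x \<in> Z \<Longrightarrow> inv\<^bsub>G\<^esub> x \<in> Z"
  proof -
    fix u assume u: "u \<in> Z"
    hence uB: "u \<in> B" using Z_iff by auto
    { fix b assume b: "b \<in> B"
      have "p b (n u) = p (n u) (p (p u b) (n u))" using uB b by (simp add: pa)
      also have "\<dots> = p (n u) (p (p b u) (n u))" using u b Z_iff by auto
      also have "\<dots> = p (n u) b" using uB b by (simp add: pa)
      finally have "p (n u) b = p b (n u)" by simp }
    thus "inv\<^bsub>G\<^esub> u \<in> Z" using uB Z_iff by simp
  qed
qed

lemma Z_conj: assumes g: "g \<in> B" and u: "u \<in> Z" shows "p (p g u) (n g) = u"
proof -
  have uB: "u \<in> B" using u Z_iff by auto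
  have "p (p g u) (n g) = p (p u g) (n g)" using u g Z_iff by auto
  also have "\<dots> = u" using uB g by (simp add: pa)
  finally show ?thesis .
qed

lemma ker_ci: "u \<in> B \<Longrightarrow> \<forall>d\<in>B. lam u d = d \<Longrightarrow> ci u = n u"
proof -
  assume uB: "u \<in> B" and k: "\<forall>d\<in>B. lam u d = d"
  have "c u (n u) = z" using uB k by (simp add: c_lam)
  hence "c (ci u) (c u (n u)) = ci u" using uB by simp
  thus "ci u = n u" using uB by simp
qed

abbreviation "Soc \<equiv> socle B p z c"
lemma Soc_iff: "u \<in> Soc \<longleftrightarrow> u \<in> B \<and> (\<forall>d\<in>B. lam u d = d) \<and> u \<in> Z"
  by (simp add: socle_def)

lemma Soc_ideal: "brace_ideal B p z c Soc"
proof (rule ideal_crit)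
  show "Soc \<subseteq> B" using Soc_iff by auto
  show "subgroup Soc G"
  proof (rule subgroup.intro)
    show "Soc \<subseteq> carrier G" using Soc_iff by auto
    show "\<one>\<^bsub>G\<^esub> \<in> Soc" using subgroup.one_closed[OF Z_sub] by (simp add: Soc_iff)
    fix u assume u: "u \<in> Soc"
    hence uB: "u \<in> B" and ku: "\<forall>d\<in>B. lam u d = d" and uZ: "u \<in> Z" using Soc_iff by auto
    { fix w assume w: "w \<in> Soc"
      hence wB: "w \<in> B" and kw: "\<forall>d\<in>B. lam w d = d" and wZ: "w \<in> Z" using Soc_iff by auto
      have "p u w \<in> Z" using subgroup.m_closed[OF Z_sub] uZ wZ by fastforce
      moreover have "p u w = c u w" using uB wB ku by (simp add: c_lam)
      moreover have "\<forall>d\<in>B. lam (c u w) d = d" using uB wB ku kw by (simp add: lam_comp)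
      ultimately show "u \<otimes>\<^bsub>G\<^esub> w \<in> Soc" using uB wB by (simp add: Soc_iff) }
    have "n u \<in> Z" using subgroup.m_inv_closed[OF Z_sub] uZ by fastforce
    moreover have "\<forall>d\<in>B. lam (n u) d = d"
    proof
      fix d assume d: "d \<in> B"
      have "lam (ci u) d = lam (ci u) (lam u d)" using ku d by simp
      also have "\<dots> = d" using uB d by (simp add: lam_comp[symmetric])
      finally show "lam (n u) d = d" using ker_ci uB ku by simp
    qed
    ultimately show "inv\<^bsub>G\<^esub> u \<in> Soc" using uB by (simp add: Soc_iff)
  qed
  show "\<forall>g\<in>B. \<forall>s\<in>Soc. p (p g s) (n g) \<in> Soc" using Z_conj Soc_iff by auto
  show "\<forall>s\<in>Soc. \<forall>b\<in>B. lam s b = b" using Soc_iff by auto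
  show "\<forall>a\<in>B. lam a ` Soc \<subseteq> Soc"
  proof (intro ballI subsetI)
    fix a y assume a: "a \<in> B" and "y \<in> lam a ` Soc"
    then obtain u where u: "u \<in> Soc" and y: "y = lam a u" by auto
    hence uB: "u \<in> B" and ku: "\<forall>d\<in>B. lam u d = d" and uZ: "u \<in> Z" using Soc_iff by auto
    have yZ: "lam a u \<in> Z" using lam_central a uZ by simp
    have "c u (ci a) = p u (ci a)" using a uB ku c_lam[of u "ci a"] by simp
    hence "c (c a u) (ci a) = c a (p u (ci a))" using a uB by (simp add: ca)
    also have "\<dots> = p (p a (lam a u)) (n a)" using a uB dist[of a u "ci a"] c_lam[of a u] by simp
    also have "\<dots> = lam a u" using Z_conj a yZ by simp
    finally have e: "c (c a u) (ci a) = lam a u" .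
    have "\<forall>d\<in>B. lam (lam a u) d = d"
    proof
      fix d assume d: "d \<in> B"
      have "lam (c (c a u) (ci a)) d = lam a (lam u (lam (ci a) d))" using a uB d by (simp add: lam_comp)
      also have "\<dots> = lam a (lam (ci a) d)" using ku a d by simp
      also have "\<dots> = d" using a d by (simp add: lam_comp[symmetric])
      finally show "lam (lam a u) d = d" using e by simp
    qed
    thus "y \<in> Soc" using y yZ a uB by (simp add: Soc_iff)
  qed
qed


abbreviation "bst \<equiv> bstar B p z c"
lemma bst_lam: "bst a b = p (lam a b) (n b)" by (simp add: bstar_def blam_def)
lemma bstc[simp,intro]: "a \<in> B \<Longrightarrow> b \<in> B \<Longrightarrow> bst a b \<in> B" by (simp add: bst_lam)

lemma I1: assumes "a \<in> B" "g \<in> B" "b \<in> B"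
  shows "p (p g (bst a b)) (n g) = p (n (bst a g)) (bst a (p g b))"
  using assms by (simp add: bst_lam lam_hom np pa)

lemma I2: assumes a: "a \<in> B" and d: "d \<in> B" and b: "b \<in> B"
  shows "lam d (bst a b) = bst (c (c d a) (ci d)) (lam d b)"
proof -
  have e: "c (c (c d a) (ci d)) d = c d a" using a d by (simp add: ca)
  have "lam d (bst a b) = p (lam (c d a) b) (n (lam d b))"
    using a d b by (simp add: bst_lam lam_hom lam_n lam_comp)
  also have "\<dots> = p (lam (c (c (c d a) (ci d)) d) b) (n (lam d b))" using e by simp
  also have "\<dots> = bst (c (c d a) (ci d)) (lam d b)"
    using a d b by (simp only: bst_lam lam_comp cc cic)
  finally show ?thesis .
qed

abbreviation "H0 \<equiv> {u. \<exists>i\<in>B. \<exists>j\<in>B. u = bst i j}"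
abbreviation "W \<equiv> star_set B p z c B B"
lemma W_gen: "W = generate G H0" by (simp add: star_set_def)
lemma H0B: "H0 \<subseteq> B" by auto
lemma W_sub: "subgroup W G" unfolding W_gen
  using group.generate_is_subgroup[OF grpG] H0B by simp
lemma WB: "W \<subseteq> B" using subgroup.subset[OF W_sub] by simp
lemma W_z: "z \<in> W" using subgroup.one_closed[OF W_sub] by simp
lemma W_p: "s \<in> W \<Longrightarrow> t \<in> W \<Longrightarrow> p s t \<in> W" using subgroup.m_closed[OF W_sub] by fastforce
lemma W_n: "s \<in> W \<Longrightarrow> n s \<in> W" using subgroup.m_inv_closed[OF W_sub] by fastforce
lemma W_H0: "h \<in> H0 \<Longrightarrow> h \<in> W" unfolding W_gen by (rule generate.incl)

lemma W_conj: assumes g: "g \<in> B" and s: "s \<in> W" shows "p (p g s) (n g) \<in> W"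
  using s[unfolded W_gen]
proof (induction rule: generate.induct)
  case one
  then show ?case using g W_z by simp
next
  case (incl h)
  then obtain a b where ab: "a \<in> B" "b \<in> B" "h = bst a b" by auto
  have "p (p g h) (n g) = p (n (bst a g)) (bst a (p g b))" using I1 ab g by simp
  moreover have "bst a g \<in> W" "bst a (p g b) \<in> W" using ab g by (auto intro!: W_H0)
  ultimately show ?case using W_p W_n by simp
next
  case (inv h)
  hence hB: "h \<in> B" by auto
  have cj: "p (p g h) (n g) \<in> W"
  proof -
    obtain a b where ab: "a \<in> B" "b \<in> B" "h = bst a b" using inv by auto
    have "p (p g h) (n g) = p (n (bst a g)) (bst a (p g b))" using I1 ab g by simp
    moreover have "bst a g \<in> W" "bst a (p g b) \<in> W" using ab g by (auto intro!: W_H0)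
    ultimately show ?thesis using W_p W_n by simp
  qed
  have "p (p g (n h)) (n g) = n (p (p g h) (n g))" using g hB by (simp add: np pa)
  thus ?case using W_n[OF cj] by simp
next
  case (eng h1 h2)
  have h1B: "h1 \<in> B" and h2B: "h2 \<in> B" using eng(1,2) WB W_gen by auto
  have "p (p g (p h1 h2)) (n g) = p (p (p g h1) (n g)) (p (p g h2) (n g))"
    using g h1B h2B by (simp add: pa)
  thus ?case using eng W_p by simp
qed

lemma W_lam: assumes d: "d \<in> B" and s: "s \<in> W" shows "lam d s \<in> W"
  using s[unfolded W_gen]
proof (induction rule: generate.induct)
  case one
  then show ?case using d W_z by simp
next
  case (incl h)
  then obtain a b where ab: "a \<in> B" "b \<in> B" "h = bst a b" by auto
  have "lam d h = bst (c (c d a) (ci d)) (lam d b)" using I2 ab d by simp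
  thus ?case using ab d by (auto intro!: W_H0)
next
  case (inv h)
  then obtain a b where ab: "a \<in> B" "b \<in> B" "h = bst a b" by auto
  have "lam d h = bst (c (c d a) (ci d)) (lam d b)" using I2 ab d by simp
  hence "lam d h \<in> W" using ab d by (auto intro!: W_H0)
  moreover have "lam d (n h) = n (lam d h)" using ab d lam_n by simp
  ultimately show ?case using W_n by simp
next
  case (eng h1 h2)
  have h1B: "h1 \<in> B" and h2B: "h2 \<in> B" using eng(1,2) WB W_gen by auto
  show ?case using eng W_p lam_hom[OF d h1B h2B] by simp
qed

lemma W_ideal: assumes ker: "\<forall>w\<in>W. \<forall>b\<in>B. lam w b = b" shows "brace_ideal B p z c W"
  using WB W_sub W_conj W_lam ker by (intro ideal_crit) auto


lemma cent_sub: assumes a: "a \<in> B" shows "subgroup {b\<in>B. p a b = p b a} G"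
proof (rule subgroup.intro)
  show "{b\<in>B. p a b = p b a} \<subseteq> carrier G" by auto
  show "\<one>\<^bsub>G\<^esub> \<in> {b\<in>B. p a b = p b a}" using a by simp
  fix x assume x: "x \<in> {b\<in>B. p a b = p b a}"
  hence xB: "x \<in> B" and xa: "p a x = p x a" by auto
  { fix y assume y: "y \<in> {b\<in>B. p a b = p b a}"
    hence yB: "y \<in> B" and ya: "p a y = p y a" by auto
    have "p a (p x y) = p (p a x) y" using a xB yB by (simp add: pa)
    also have "\<dots> = p x (p a y)" using xa a xB yB by (simp add: pa)
    also have "\<dots> = p (p x y) a" using ya a xB yB by (simp add: pa)
    finally show "x \<otimes>\<^bsub>G\<^esub> y \<in> {b\<in>B. p a b = p b a}" using xB yB by simp }
  have "p a (n x) = p (n x) (p (p x a) (n x))" using a xB by (simp add: pa)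
  also have "\<dots> = p (n x) (p (p a x) (n x))" using xa by simp
  also have "\<dots> = p (n x) a" using a xB by (simp add: pa)
  finally show "inv\<^bsub>G\<^esub> x \<in> {b\<in>B. p a b = p b a}" using xB by simp
qed

lemma comm_w: assumes v: "v \<in> B" and xi: "xi \<in> B" and w: "w \<in> B"
  shows "(p (p v xi) w = p w (p v xi)) \<longleftrightarrow> p (p xi w) (n xi) = p (p (n v) w) v"
proof -
  have "(p (p v xi) w = p w (p v xi)) \<longleftrightarrow> p (p (p v xi) w) (n xi) = p (p w (p v xi)) (n xi)"
    using rcan[of "n xi" "p (p v xi) w" "p w (p v xi)"] v xi w by simp
  also have "\<dots> \<longleftrightarrow> p v (p (p xi w) (n xi)) = p w v" using v xi w by (simp add: pa)
  also have "\<dots> \<longleftrightarrow> p (n v) (p v (p (p xi w) (n xi))) = p (n v) (p w v)"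
    using lcan[of "n v" "p v (p (p xi w) (n xi))" "p w v"] v xi w by simp
  also have "\<dots> \<longleftrightarrow> p (p xi w) (n xi) = p (p (n v) w) v" using v xi w by (simp add: pa)
  finally show ?thesis .
qed

lemma comm_x: assumes v: "v \<in> B" and xi: "xi \<in> B" and x: "x \<in> B" and xx: "p xi x = p x xi"
  shows "(p (p v xi) x = p x (p v xi)) \<longleftrightarrow> p (p x v) (n x) = v"
proof -
  have "(p (p v xi) x = p x (p v xi)) \<longleftrightarrow> p (p v x) xi = p (p x v) xi"
    using v xi x xx by (simp add: pa)
  also have "\<dots> \<longleftrightarrow> p v x = p x v" using rcan v xi x by simp
  also have "\<dots> \<longleftrightarrow> p (p v x) (n x) = p (p x v) (n x)" using rcan[of "n x" "p v x" "p x v"] v x by simp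
  also have "\<dots> \<longleftrightarrow> p (p x v) (n x) = v" using v x by (auto simp: pa)
  finally show ?thesis .
qed

lemma Apow: assumes x: "x \<in> B" and w: "w \<in> B"
  shows "((\<lambda>u. p (p x u) (n x)) ^^ i) w = p (p (pow G x i) w) (n (pow G x i))"
proof (induction i)
  case 0
  then show ?case using w by simp
next
  case (Suc i)
  have xi: "pow G x i \<in> B" using monoid.nat_pow_closed[OF group.is_monoid[OF grpG]] x by fastforce
  have s: "pow G x (Suc i) = p x (pow G x i)"
    using monoid.nat_pow_Suc2[OF group.is_monoid[OF grpG]] x by fastforce
  show ?case unfolding s using Suc xi x w by (simp add: np pa del: nat_pow_Suc)
qed

end

theorem lemma5p5:
  fixes B :: "'a set" and p c :: "'a \<Rightarrow> 'a \<Rightarrow> 'a" and z :: 'a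
    and Xs V :: "'a set" and x v :: 'a and i :: nat
  assumes brace: "skew_brace B p z c"
    and finB: "finite B"
    and XB: "Xs \<subseteq> B" and cardX: "card Xs \<ge> 3"
    and lamX: "\<forall>a\<in>B. blam B p z c a ` Xs = Xs"
    and sigX: "\<forall>a\<in>B. bsig B p z a ` Xs = Xs"
    and genX: "generate (addG B p z) Xs = B"
    and V_def: "V = ideal_gen B p z c {u. \<exists>y\<in>Xs. \<exists>y'\<in>Xs. u = p y (bneg B p z y')}"
    and V_min: "V \<noteq> {z} \<and> (\<forall>I. brace_ideal B p z c I \<and> I \<noteq> {z} \<longrightarrow> V \<subseteq> I)"
    and quot_trivial: "\<forall>a\<in>B. \<forall>b\<in>B. p (bneg B p z (p a b)) (c a b) \<in> V"
    and quot_cyclic: "\<exists>g\<in>B. \<forall>b\<in>B. \<exists>n::int. p (bneg B p z (pow (addG B p z) g n)) b \<in> V"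
    and trans: "\<forall>y\<in>Xs. \<forall>y'\<in>Xs. \<exists>a\<in>V. \<exists>b\<in>V. bsig B p z a (blam B p z c b y) = y'"
    and B3: "star_set B p z c (star_set B p z c B B) B = {z}"
    and xX: "x \<in> Xs"
    and vV: "v \<in> V"
    and ik: "i < card (RCOSETS (addG B p z) V)"
  shows "(p v (pow (addG B p z) x i) \<in> add_center B p \<longleftrightarrow>
            p (p x v) (bneg B p z x) = v \<and>
            (\<forall>w\<in>V. ((\<lambda>u. p (p x u) (bneg B p z x)) ^^ i) w = p (p (bneg B p z v) w) v))
       \<and> V \<inter> add_center B p = {z}
       \<and> socle B p z c = {z}"
proof -
  interpret S: SB B p z c by (rule SB.intro) (rule brace)
  have grp: "group (addG B p z)" by (rule S.grpG)
  define Sg where "Sg = {u. \<exists>y\<in>Xs. \<exists>y'\<in>Xs. u = p y (bneg B p z y')}"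
  define Fam where "Fam = {I. brace_ideal B p z c I \<and> Sg \<subseteq> I}"
  have VF: "V = \<Inter>Fam" using V_def unfolding Sg_def Fam_def ideal_gen_def by simp
  have SgB: "Sg \<subseteq> B" using XB unfolding Sg_def by auto
  have BF: "B \<in> Fam" using S.B_ideal SgB unfolding Fam_def by auto
  have VB: "V \<subseteq> B" using VF BF by auto
  have SgV: "Sg \<subseteq> V" using VF unfolding Fam_def by auto
  have Vsub: "subgroup V (addG B p z)"
    unfolding VF
  proof (rule group.subgroups_Inter[OF grp])
    show "Fam \<noteq> {}" using BF by auto
    fix I assume "I \<in> Fam"
    thus "subgroup I (addG B p z)" unfolding Fam_def brace_ideal_def by (auto intro: normal_imp_subgroup)
  qed
  have Vconj: "\<And>g u. g \<in> B \<Longrightarrow> u \<in> V \<Longrightarrow> p (p g u) (bneg B p z g) \<in> V"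
  proof -
    fix g u assume g: "g \<in> B" and u: "u \<in> V"
    { fix I assume I: "I \<in> Fam"
      hence "normal I (addG B p z)" unfolding Fam_def brace_ideal_def by auto
      hence "p (p g u) (bneg B p z g) \<in> I"
        using group.normal_inv_iff[OF grp] g u I VF by auto }
    thus "p (p g u) (bneg B p z g) \<in> V" using VF by auto
  qed
  have Vlam: "\<And>a u. a \<in> B \<Longrightarrow> u \<in> V \<Longrightarrow> blam B p z c a u \<in> V"
  proof -
    fix a u assume a: "a \<in> B" and u: "u \<in> V"
    { fix I assume I: "I \<in> Fam"
      hence "blam B p z c a ` I \<subseteq> I" using a unfolding Fam_def brace_ideal_def by auto
      hence "blam B p z c a u \<in> I" using u I VF by auto }
    thus "blam B p z c a u \<in> V" using VF by auto
  qed
  have zV: "z \<in> V" using subgroup.one_closed[OF Vsub] by simp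
  have kerW: "\<forall>w\<in>star_set B p z c B B. \<forall>b\<in>B. blam B p z c w b = b"
  proof (intro ballI)
    fix w b assume w: "w \<in> star_set B p z c B B" and b: "b \<in> B"
    have wB: "w \<in> B" using w S.WB by auto
    have "bstar B p z c w b \<in> star_set B p z c (star_set B p z c B B) B"
      unfolding star_set_def[of B p z c "star_set B p z c B B" B]
      using w b by (auto intro: generate.incl)
    hence "p (blam B p z c w b) (bneg B p z b) = p b (bneg B p z b)" using B3 b S.bst_lam by simp
    thus "blam B p z c w b = b" using S.rcan wB b by (meson S.lamc S.nc)
  qed
  have Vker: "\<forall>u\<in>V. \<forall>b\<in>B. blam B p z c u b = b"
  proof (cases "star_set B p z c B B = {z}")
    case True
    { fix a b assume a: "a \<in> B" and b: "b \<in> B"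
      have "bstar B p z c a b \<in> star_set B p z c B B" using a b by (auto intro: S.W_H0)
      hence "p (blam B p z c a b) (bneg B p z b) = p b (bneg B p z b)" using True b S.bst_lam by simp
      hence "blam B p z c a b = b" using S.rcan a b by (meson S.lamc S.nc) }
    thus ?thesis using VB by auto
  next
    case False
    hence "V \<subseteq> star_set B p z c B B" using V_min S.W_ideal kerW by auto
    thus ?thesis using kerW by auto
  qed
  have contra: "V \<subseteq> add_center B p \<Longrightarrow> False"
  proof -
    assume VZ: "V \<subseteq> add_center B p"
    have eq: "\<forall>y\<in>Xs. \<forall>y'\<in>Xs. y = y'"
    proof (intro ballI)
      fix y y' assume y: "y \<in> Xs" and y': "y' \<in> Xs"
      obtain a b where a: "a \<in> V" and b: "b \<in> V" and e: "bsig B p z a (blam B p z c b y) = y'"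
        using trans y y' by blast
      have yB: "y \<in> B" using y XB by auto
      have aB: "a \<in> B" using a VB by auto
      have "blam B p z c b y = y" using Vker b yB by auto
      hence e2: "p (p (bneg B p z a) y) a = y'" using e by (simp add: bsig_def)
      have "bneg B p z a \<in> add_center B p"
        using subgroup.m_inv_closed[OF S.Z_sub] VZ a by fastforce
      hence "p (bneg B p z a) y = p y (bneg B p z a)" using yB S.Z_iff by auto
      hence "y' = p (p y (bneg B p z a)) a" using e2 by simp
      thus "y = y'" using yB aB by (simp add: S.pa)
    qed
    have finX: "finite Xs" using cardX card.infinite by fastforce
    have "card Xs \<le> Suc 0" using card_le_Suc0_iff_eq[OF finX] eq by auto
    thus False using cardX by simp
  qed
  have part2: "V \<inter> add_center B p = {z}"
  proof -
    have I: "brace_ideal B p z c (V \<inter> add_center B p)"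
    proof (rule S.ideal_crit)
      show "V \<inter> add_center B p \<subseteq> B" using VB by auto
      show "subgroup (V \<inter> add_center B p) (addG B p z)"
        using group.subgroups_Inter_pair[OF grp Vsub S.Z_sub] .
      show "\<forall>g\<in>B. \<forall>s\<in>V \<inter> add_center B p. p (p g s) (bneg B p z g) \<in> V \<inter> add_center B p"
        using S.Z_conj by auto
      show "\<forall>a\<in>B. blam B p z c a ` (V \<inter> add_center B p) \<subseteq> V \<inter> add_center B p"
        using Vlam S.lam_central by auto
      show "\<forall>s\<in>V \<inter> add_center B p. \<forall>b\<in>B. blam B p z c s b = b" using Vker by auto
    qed
    have "z \<in> V \<inter> add_center B p" using zV by (simp add: S.Z_iff)
    moreover have "V \<inter> add_center B p = {z}"
    proof (rule ccontr)
      assume "V \<inter> add_center B p \<noteq> {z}"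
      hence "V \<subseteq> V \<inter> add_center B p" using V_min I by blast
      thus False using contra by auto
    qed
    ultimately show ?thesis by simp
  qed
  have part3: "socle B p z c = {z}"
  proof (rule ccontr)
    assume "socle B p z c \<noteq> {z}"
    hence "V \<subseteq> socle B p z c" using V_min S.Soc_ideal by blast
    thus False using contra S.Soc_iff by auto
  qed
  define xi where "xi = pow (addG B p z) x i"
  have xB: "x \<in> B" using xX XB by auto
  have vB: "v \<in> B" using vV VB by auto
  have xiB: "xi \<in> B" unfolding xi_def
    using monoid.nat_pow_closed[OF group.is_monoid[OF grp]] xB by fastforce
  have xxi: "p xi x = p x xi"
  proof -
    have "pow (addG B p z) x (Suc i) = p xi x"
      using monoid.nat_pow_Suc[OF group.is_monoid[OF grp]] xB unfolding xi_def by fastforce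
    moreover have "pow (addG B p z) x (Suc i) = p x xi"
      using monoid.nat_pow_Suc2[OF group.is_monoid[OF grp]] xB unfolding xi_def by fastforce
    ultimately show ?thesis by simp
  qed
  have aB: "p v xi \<in> B" using vB xiB by simp
  have part1: "p v xi \<in> add_center B p \<longleftrightarrow>
            p (p x v) (bneg B p z x) = v \<and>
            (\<forall>w\<in>V. ((\<lambda>u. p (p x u) (bneg B p z x)) ^^ i) w = p (p (bneg B p z v) w) v)"
    (is "?L \<longleftrightarrow> ?R1 \<and> ?R2")
  proof
    assume L: ?L
    have "p (p v xi) x = p x (p v xi)" using L xB S.Z_iff by auto
    hence R1: ?R1 using S.comm_x[OF vB xiB xB xxi] by simp
    have R2: ?R2
    proof
      fix w assume w: "w \<in> V"
      hence wB: "w \<in> B" using VB by auto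
      have "p (p v xi) w = p w (p v xi)" using L wB S.Z_iff by auto
      hence "p (p xi w) (bneg B p z xi) = p (p (bneg B p z v) w) v" using S.comm_w[OF vB xiB wB] by simp
      thus "((\<lambda>u. p (p x u) (bneg B p z x)) ^^ i) w = p (p (bneg B p z v) w) v"
        using S.Apow[OF xB wB] unfolding xi_def by simp
    qed
    show "?R1 \<and> ?R2" using R1 R2 by simp
  next
    assume R: "?R1 \<and> ?R2"
    let ?a = "p v xi"
    have cx: "p ?a x = p x ?a" using R S.comm_x[OF vB xiB xB xxi] by simp
    have cw: "\<And>w. w \<in> V \<Longrightarrow> p ?a w = p w ?a"
    proof -
      fix w assume w: "w \<in> V"
      hence wB: "w \<in> B" using VB by auto
      have "((\<lambda>u. p (p x u) (bneg B p z x)) ^^ i) w = p (p (bneg B p z v) w) v"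
        using R w by blast
      hence "p (p xi w) (bneg B p z xi) = p (p (bneg B p z v) w) v"
        using S.Apow[OF xB wB, of i] unfolding xi_def by simp
      thus "p ?a w = p w ?a" using S.comm_w[OF vB xiB wB] by simp
    qed
    define Cn where "Cn = {b\<in>B. p ?a b = p b ?a}"
    have Csub: "subgroup Cn (addG B p z)" unfolding Cn_def by (rule S.cent_sub[OF aB])
    have XC: "Xs \<subseteq> Cn"
    proof
      fix y assume y: "y \<in> Xs"
      have yB: "y \<in> B" using y XB by auto
      define u where "u = p y (bneg B p z x)"
      have uV: "u \<in> V" using SgV y xX unfolding Sg_def u_def by auto
      hence uB: "u \<in> B" using VB by auto
      have yu: "y = p u x" using yB xB unfolding u_def by (simp add: S.pa)
      have "p ?a (p u x) = p (p ?a u) x" using aB uB xB by (simp add: S.pa)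
      also have "\<dots> = p u (p ?a x)" using cw[OF uV] aB uB xB by (simp add: S.pa)
      also have "\<dots> = p (p u x) ?a" using cx aB uB xB by (simp add: S.pa)
      finally show "y \<in> Cn" using yu yB unfolding Cn_def by simp
    qed
    have "generate (addG B p z) Xs \<subseteq> Cn"
      using group.generate_subgroup_incl[OF grp XC Csub] .
    hence "B \<subseteq> Cn" using genX by simp
    thus ?L using aB S.Z_iff unfolding Cn_def by auto
  qed
  show ?thesis using part1 part2 part3 unfolding xi_def by simp
qed

end
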